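(* Let $q\geq 2$ and $k$ be relatively prime natural numbers, and let \[ k=k_1+k_2q^{a_2}+\cdots+k_Nq^{a_N} \] be the base-$q$ expansion of $k$, where $0<a_2<\cdots<a_N$ and $1\le k_i<q$ (only nonzero digits listed). Then there exist $k', u\in\mathbb{N}$ such that $u>1$, $k\mid k'$, and the base-$q$ expansion of $k'$ is \[ k'=k_1+k_2q^{a_2'}+\cdots+k_Nq^{a_N'} \] (with $0<a_2'<\cdots<a_N'$), where $a_i'\equiv 1\pmod{u}$ for all $i\in\{2,\ldots,N\}$. *)

theory Defs
  imports "HOL-Number_Theory.Number_Theory"
begin

end

theory Submission
  imports Defs
begin

theorem lemma1:
  fixes q k N :: nat and kd a :: "nat \<Rightarrow> nat"
  assumes "q \<ge> 2" and "coprime q k" and "N \<ge> 1"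
    and "\<forall>i\<in>{1..N}. 1 \<le> kd i \<and> kd i < q"
    and "\<forall>i\<in>{2..N}. 0 < a i"
    and "strict_mono_on {2..N} a"
    and "k = kd 1 + (\<Sum>i=2..N. kd i * q ^ a i)"
  shows "\<exists>k' u :: nat. \<exists>a' :: nat \<Rightarrow> nat. u > 1 \<and> k dvd k'
           \<and> (\<forall>i\<in>{2..N}. 0 < a' i) \<and> strict_mono_on {2..N} a'
           \<and> k' = kd 1 + (\<Sum>i=2..N. kd i * q ^ a' i)
           \<and> (\<forall>i\<in>{2..N}. [a' i = 1] (mod u))"
proof -
  define m where "m = totient k"
  have k1: "kd 1 \<ge> 1" using assms(3,4) by auto
  hence kpos: "k > 0" using assms(7) by simp
  have mpos: "m > 0" unfolding m_def using kpos by simp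
  have eul: "[q ^ m = 1] (mod k)" unfolding m_def
    using euler_theorem[of q k] assms(2) by simp
  define a' where "a' = (\<lambda>i. (m+1) * (a i - 1) + 1)"
  define k' where "k' = kd 1 + (\<Sum>i=2..N. kd i * q ^ a' i)"
  have a'eq: "a' i = a i + m * (a i - 1)" if "i \<in> {2..N}" for i
  proof -
    have "a i > 0" using assms(5) that by blast
    thus ?thesis unfolding a'_def by (cases "a i") (auto simp: algebra_simps)
  qed
  have pc: "[q ^ a' i = q ^ a i] (mod k)" if "i \<in> {2..N}" for i
  proof -
    have "q ^ a' i = q ^ a i * (q ^ m) ^ (a i - 1)"
      using a'eq[OF that] by (simp add: power_add power_mult)
    moreover have "[q ^ a i * (q ^ m) ^ (a i - 1) = q ^ a i * 1 ^ (a i - 1)] (mod k)"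
      by (intro cong_mult cong_pow eul cong_refl)
    ultimately show ?thesis by simp
  qed
  have "[k' = kd 1 + (\<Sum>i=2..N. kd i * q ^ a i)] (mod k)"
    unfolding k'_def
    by (intro cong_add cong_refl cong_sum cong_mult pc) auto
  hence "[k' = k] (mod k)" using assms(7) by simp
  hence "k dvd k'" by (simp add: cong_0_iff[symmetric] cong_sym_eq cong_def)
  moreover have "strict_mono_on {2..N} a'"
  proof (rule strict_mono_onI)
    fix r s assume rs: "r \<in> {2..N}" "s \<in> {2..N}" "r < s"
    hence "a r < a s" using assms(6) by (simp add: strict_mono_on_def)
    moreover have "a r > 0" using assms(5) rs(1) by blast
    ultimately have "a r - 1 < a s - 1" by simp
    hence "(m+1) * (a r - 1) < (m+1) * (a s - 1)" by (intro mult_strict_left_mono) auto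
    thus "a' r < a' s" unfolding a'_def by linarith
  qed
  moreover have "\<forall>i\<in>{2..N}. [a' i = 1] (mod (m+1))"
  proof
    fix i
    have "((m+1) * (a i - 1) + 1) mod (m+1) = 1 mod (m+1)"
      by (rule mod_mult_self4)
    thus "[a' i = 1] (mod (m+1))" unfolding a'_def cong_def .
  qed
  moreover have "\<forall>i\<in>{2..N}. 0 < a' i" unfolding a'_def by simp
  moreover have "m + 1 > 1" using mpos by simp
  ultimately show ?thesis unfolding k'_def by blast
qed

end
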